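(* Let $C\subset\mathbb R^3$ be an embedded curve (closed or non-closed) with nowhere vanishing curvature, and let $F\in\mathcal D(|C|)$ be a normal form. Then $F(\Omega_\epsilon)\cap\check F(\Omega_\epsilon)=C$ for all sufficiently small $\epsilon>0$. Moreover, the origami map $\Phi_F$ has no self-intersections (on $\Omega_\epsilon$ for sufficiently small $\epsilon>0$).
   Context: $C$ has length $l>0$ and an orientation; $-C$ is the oppositely oriented curve. $J=[-l/2,l/2]$ if $C$ is non-closed, $J=\mathbb R/l\mathbb Z$ if closed; $\Omega_\epsilon:=J\times(-\epsilon,\epsilon)$. A developable strip along $C$ is the germ of a $C^\infty$ embedding $f(u,v)=f(u,0)+v\,\xi_f(u)$ with $\mathbf c_f(u)=f(u,0)$ parametrizing $C$, $\xi_f$ a unit vector field, and zero Gaussian curvature; with the Frenet frame $(\mathbf e,\mathbf n,\mathbf b)$ of $\mathbf c_f$ write $\xi_f=\cos\beta_f\,\mathbf e+\sin\beta_f(\cos\alpha_f\,\mathbf n+\sin\alpha_f\,\mathbf b)$. $\mathcal D(C)$: strips with $\mathbf c_f$ inducing the orientation of $C$ and $0<|\cos\alpha_f|<1$, normalized so $0<|\alpha_f|<\pi/2$ (first angular function), $0<\beta_f<\pi$. $\mathcal D(|C|)=\mathcal D(C)\cup\mathcal D(-C)$. A normal form is such a strip $F(s,v)$ defined near $J\times\{0\}$ with $s\mapsto F(s,0)$ an arc-length parametrization of $C$; it is determined by this parametrization and its first angular function (zero Gaussian curvature being equivalent to $\cot\beta_F=(\alpha_F'+\tau)/(\kappa\sin\alpha_F)$).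 The dual $\check F$ is the normal form with $\check F(s,0)=F(s,0)$ and first angular function $-\alpha_F$. The origami map is $\Phi_F(s,v)=F(s,v)$ for $v\ge0$ and $\Phi_F(s,v)=\check F(s,v)$ for $v<0$. *)

theory Defs
  imports "HOL-Analysis.Analysis"
begin

definition vderiv :: "(real \<Rightarrow> 'a::real_normed_vector) \<Rightarrow> real \<Rightarrow> 'a" where
  "vderiv f = (\<lambda>x. vector_derivative f (at x))"

definition smooth_fn :: "(real \<Rightarrow> 'a::real_normed_vector) \<Rightarrow> bool" where
  "smooth_fn f \<longleftrightarrow> (\<forall>n x. ((vderiv ^^ n) f) differentiable (at x))"

text \<open>Parameter domain J: [-l/2,l/2] in the non-closed case; in the closed case
  R/lZ is modelled by all of R together with l-periodicity.\<close>
definition Jdom :: "bool \<Rightarrow> real \<Rightarrow> real set" where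
  "Jdom cl l = (if cl then UNIV else {-l/2..l/2})"

definition Jeq :: "bool \<Rightarrow> real \<Rightarrow> real \<Rightarrow> real \<Rightarrow> bool" where
  "Jeq cl l s t \<longleftrightarrow> (if cl then (\<exists>k::int. s - t = of_int k * l) else s = t)"

definition Omega :: "bool \<Rightarrow> real \<Rightarrow> real \<Rightarrow> (real \<times> real) set" where
  "Omega cl l \<epsilon> = Jdom cl l \<times> {-\<epsilon><..<\<epsilon>}"

definition periodic :: "real \<Rightarrow> (real \<Rightarrow> 'a) \<Rightarrow> bool" where
  "periodic l f \<longleftrightarrow> (\<forall>s. f (s + l) = f s)"

definition curvature :: "(real \<Rightarrow> real^3) \<Rightarrow> real \<Rightarrow> real" where
  "curvature c s = norm (vderiv (vderiv c) s)"

definition tangent :: "(real \<Rightarrow> real^3) \<Rightarrow> real \<Rightarrow> real^3" where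
  "tangent c s = vderiv c s"

definition principal_normal :: "(real \<Rightarrow> real^3) \<Rightarrow> real \<Rightarrow> real^3" where
  "principal_normal c s = (1 / curvature c s) *\<^sub>R vderiv (vderiv c) s"

definition binormal :: "(real \<Rightarrow> real^3) \<Rightarrow> real \<Rightarrow> real^3" where
  "binormal c s = cross3 (tangent c s) (principal_normal c s)"

definition torsion :: "(real \<Rightarrow> real^3) \<Rightarrow> real \<Rightarrow> real" where
  "torsion c s = (cross3 (vderiv c s) (vderiv (vderiv c) s) \<bullet> vderiv (vderiv (vderiv c)) s)
                 / (curvature c s)\<^sup>2"

definition arclength_embedded_curve :: "bool \<Rightarrow> real \<Rightarrow> (real \<Rightarrow> real^3) \<Rightarrow> bool" where
  "arclength_embedded_curve cl l c \<longleftrightarrow>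
     l > 0 \<and> smooth_fn c \<and>
     (\<forall>s\<in>Jdom cl l. norm (vderiv c s) = 1) \<and>
     (if cl then periodic l c \<and> inj_on c {0..<l} else inj_on c {-l/2..l/2})"

definition ruling :: "(real \<Rightarrow> real^3) \<Rightarrow> (real \<Rightarrow> real) \<Rightarrow> (real \<Rightarrow> real) \<Rightarrow> real \<Rightarrow> real^3" where
  "ruling c \<alpha> \<beta> s = cos (\<beta> s) *\<^sub>R tangent c s
      + sin (\<beta> s) *\<^sub>R (cos (\<alpha> s) *\<^sub>R principal_normal c s + sin (\<alpha> s) *\<^sub>R binormal c s)"

definition strip :: "(real \<Rightarrow> real^3) \<Rightarrow> (real \<Rightarrow> real) \<Rightarrow> (real \<Rightarrow> real) \<Rightarrow> real \<times> real \<Rightarrow> real^3" where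
  "strip c \<alpha> \<beta> = (\<lambda>(s, v). c s + v *\<^sub>R ruling c \<alpha> \<beta> s)"

text \<open>Normal form along the arc-length parametrization c with first angular function alpha
  (0 < |alpha| < pi/2) and second angular function beta in (0,pi); zero Gaussian curvature
  is expressed by cot beta = (alpha' + tau)/(kappa sin alpha).\<close>
definition normal_form :: "bool \<Rightarrow> real \<Rightarrow> (real \<Rightarrow> real^3) \<Rightarrow> (real \<Rightarrow> real) \<Rightarrow> (real \<Rightarrow> real) \<Rightarrow> bool" where
  "normal_form cl l c \<alpha> \<beta> \<longleftrightarrow>
     smooth_fn \<alpha> \<and> smooth_fn \<beta> \<and>
     (cl \<longrightarrow> periodic l \<alpha> \<and> periodic l \<beta>) \<and>
     (\<forall>s\<in>Jdom cl l. 0 < \<bar>\<alpha> s\<bar> \<and> \<bar>\<alpha> s\<bar> < pi/2 \<and> 0 < \<beta> s \<and> \<beta> s < pi \<and>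
        cot (\<beta> s) = (vderiv \<alpha> s + torsion c s) / (curvature c s * sin (\<alpha> s)))"

definition origami :: "((real \<times> real) \<Rightarrow> real^3) \<Rightarrow> ((real \<times> real) \<Rightarrow> real^3) \<Rightarrow> real \<times> real \<Rightarrow> real^3" where
  "origami F Fd = (\<lambda>(s, v). if v \<ge> 0 then F (s, v) else Fd (s, v))"

end

theory Submission
  imports Defs
begin


definition lip :: "real set \<Rightarrow> (real \<Rightarrow> 'a::real_normed_vector) \<Rightarrow> bool" where
  "lip I f \<longleftrightarrow> (\<exists>L. \<forall>x\<in>I. \<forall>y\<in>I. norm (f x - f y) \<le> L * \<bar>x - y\<bar>)"

lemma lipE: assumes "lip I f" obtains L where "L > 0" "\<And>x y. x\<in>I \<Longrightarrow> y\<in>I \<Longrightarrow> norm (f x - f y) \<le> L * \<bar>x - y\<bar>"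
proof -
  obtain L where L: "\<forall>x\<in>I. \<forall>y\<in>I. norm (f x - f y) \<le> L * \<bar>x - y\<bar>" using assms lip_def by blast
  have "norm (f x - f y) \<le> (max L 1) * \<bar>x - y\<bar>" if "x\<in>I" "y\<in>I" for x y
    using L that by (meson abs_ge_zero max.cobounded1 mult_right_mono order_trans)
  then show ?thesis using that[of "max L 1"] by auto
qed

lemma lip_cont: assumes "lip I f" shows "continuous_on I f"
proof -
  obtain L where L: "L > 0" "\<And>x y. x\<in>I \<Longrightarrow> y\<in>I \<Longrightarrow> norm (f x - f y) \<le> L * \<bar>x - y\<bar>"
    using assms lipE by blast
  show ?thesis unfolding continuous_on_iff
  proof (intro ballI allI impI)
    fix x e assume x: "x \<in> I" and e: "(0::real) < e"
    show "\<exists>d>0. \<forall>y\<in>I. dist y x < d \<longrightarrow> dist (f y) (f x) < e"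
    proof (intro exI[of _ "e / L"] conjI ballI impI)
      show "0 < e / L" using e L by simp
      fix y assume y: "y \<in> I" and d: "dist y x < e / L"
      have "dist (f y) (f x) \<le> L * \<bar>y - x\<bar>" using L(2)[OF y x] by (simp add: dist_norm)
      also have "\<dots> < L * (e / L)" using d L(1) by (simp add: dist_real_def abs_minus_commute mult.commute pos_less_divide_eq)
      also have "\<dots> = e" using L(1) by simp
      finally show "dist (f y) (f x) < e" .
    qed
  qed
qed

lemma lip_bnd: assumes "lip I f" "compact I" obtains B where "B > 0" "\<And>x. x\<in>I \<Longrightarrow> norm (f x) \<le> B"
proof -
  have "compact (f ` I)" using compact_continuous_image[OF lip_cont[OF assms(1)] assms(2)] .
  then obtain B where "B > 0" "\<forall>y\<in>f ` I. norm y \<le> B" using compact_imp_bounded bounded_pos by metis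
  then show ?thesis using that by auto
qed

lemma lip_add: "lip I f \<Longrightarrow> lip I g \<Longrightarrow> lip I (\<lambda>x. f x + g x)"
proof -
  assume "lip I f" "lip I g"
  then obtain L1 L2 where L1: "\<And>x y. x\<in>I \<Longrightarrow> y\<in>I \<Longrightarrow> norm (f x - f y) \<le> L1 * \<bar>x - y\<bar>"
    and L2: "\<And>x y. x\<in>I \<Longrightarrow> y\<in>I \<Longrightarrow> norm (g x - g y) \<le> L2 * \<bar>x - y\<bar>" by (metis lipE)
  have "norm ((f x + g x) - (f y + g y)) \<le> (L1 + L2) * \<bar>x - y\<bar>" if "x\<in>I" "y\<in>I" for x y
  proof -
    have "norm ((f x + g x) - (f y + g y)) \<le> norm (f x - f y) + norm (g x - g y)"
      by (metis add_diff_add norm_triangle_ineq)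
    also have "\<dots> \<le> (L1 + L2) * \<bar>x - y\<bar>" using L1[OF that] L2[OF that] by (simp add: distrib_right)
    finally show ?thesis .
  qed
  then show ?thesis unfolding lip_def by blast
qed

lemma lip_bilin:
  fixes prod :: "'a::real_normed_vector \<Rightarrow> 'b::real_normed_vector \<Rightarrow> 'c::real_normed_vector"
    and f :: "real \<Rightarrow> 'a" and g :: "real \<Rightarrow> 'b"
  assumes bb: "bounded_bilinear prod" and f: "lip I f" and g: "lip I g" and I: "compact I"
  shows "lip I (\<lambda>x. prod (f x) (g x))"
proof -
  obtain K where K: "K > 0" "\<And>a b. norm (prod a b) \<le> norm a * norm b * K"
    using bounded_bilinear.pos_bounded[OF bb] by blast
  obtain L1 where L1: "L1 > 0" "\<And>x y. x\<in>I \<Longrightarrow> y\<in>I \<Longrightarrow> norm (f x - f y) \<le> L1 * \<bar>x - y\<bar>" using f lipE by blast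
  obtain L2 where L2: "L2 > 0" "\<And>x y. x\<in>I \<Longrightarrow> y\<in>I \<Longrightarrow> norm (g x - g y) \<le> L2 * \<bar>x - y\<bar>" using g lipE by blast
  obtain B1 where B1: "B1 > 0" "\<And>x. x\<in>I \<Longrightarrow> norm (f x) \<le> B1" using lip_bnd[OF f I] by blast
  obtain B2 where B2: "B2 > 0" "\<And>x. x\<in>I \<Longrightarrow> norm (g x) \<le> B2" using lip_bnd[OF g I] by blast
  have "norm (prod (f x) (g x) - prod (f y) (g y)) \<le> (L1 * B2 * K + B1 * L2 * K) * \<bar>x - y\<bar>"
    if x: "x\<in>I" and y: "y\<in>I" for x y
  proof -
    have eq: "prod (f x) (g x) - prod (f y) (g y) = prod (f x - f y) (g x) + prod (f y) (g x - g y)"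
      by (simp add: bounded_bilinear.diff_left[OF bb] bounded_bilinear.diff_right[OF bb])
    have a: "norm (prod (f x - f y) (g x)) \<le> (L1 * \<bar>x - y\<bar>) * B2 * K"
    proof -
      have "norm (prod (f x - f y) (g x)) \<le> norm (f x - f y) * norm (g x) * K" by (rule K(2))
      also have "\<dots> \<le> (L1 * \<bar>x - y\<bar>) * B2 * K"
        using L1(2)[OF x y] B2(2)[OF x] K(1) L1(1) by (intro mult_right_mono mult_mono) auto
      finally show ?thesis .
    qed
    have b: "norm (prod (f y) (g x - g y)) \<le> B1 * (L2 * \<bar>x - y\<bar>) * K"
    proof -
      have "norm (prod (f y) (g x - g y)) \<le> norm (f y) * norm (g x - g y) * K" by (rule K(2))
      also have "\<dots> \<le> B1 * (L2 * \<bar>x - y\<bar>) * K"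
        using L2(2)[OF x y] B1(2)[OF y] K(1) B1(1) by (intro mult_right_mono mult_mono) auto
      finally show ?thesis .
    qed
    show ?thesis unfolding eq using norm_triangle_le[OF add_mono[OF a b]]
      by (simp add: algebra_simps)
  qed
  then show ?thesis unfolding lip_def by blast
qed

lemma lip_deriv:
  fixes f :: "real \<Rightarrow> 'a::real_normed_vector"
  assumes d: "\<And>x. x \<in> {a..b} \<Longrightarrow> (f has_vector_derivative f' x) (at x)"
    and c: "continuous_on {a..b} f'"
  shows "lip {a..b} f"
proof -
  obtain B where B: "\<And>x. x\<in>{a..b} \<Longrightarrow> norm (f' x) \<le> B"
    using compact_imp_bounded[OF compact_continuous_image[OF c compact_Icc]] bounded_iff by (metis imageI)
  have "norm (f x - f y) \<le> B * norm (x - y)" if "x \<in> {a..b}" "y \<in> {a..b}" for x y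
  proof (rule differentiable_bound[of "{a..b}" f "\<lambda>x h. h *\<^sub>R f' x"])
    show "convex {a..b}" by simp
    show "(f has_derivative (\<lambda>h. h *\<^sub>R f' x)) (at x within {a..b})" if "x \<in> {a..b}" for x
      using d[OF that] by (simp add: has_vector_derivative_def has_derivative_at_withinI)
    show "onorm (\<lambda>h. h *\<^sub>R f' x) \<le> B" if "x \<in> {a..b}" for x
      using onorm_scaleR_left[OF bounded_linear_ident, of "f' x"] B[OF that] by (simp add: onorm_id)
  qed (use that in auto)
  then show ?thesis unfolding lip_def by (metis real_norm_def)
qed

lemma lip_inv:
  assumes f: "lip I (f :: real \<Rightarrow> real)" and k: "k > 0" "\<And>x. x\<in>I \<Longrightarrow> f x \<ge> k"
  shows "lip I (\<lambda>x. 1 / f x)"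
proof -
  obtain L where L: "L > 0" "\<And>x y. x\<in>I \<Longrightarrow> y\<in>I \<Longrightarrow> norm (f x - f y) \<le> L * \<bar>x - y\<bar>" using f lipE by blast
  have "norm (1 / f x - 1 / f y) \<le> (L / k^2) * \<bar>x - y\<bar>" if x: "x\<in>I" and y: "y\<in>I" for x y
  proof -
    have fx: "f x \<ge> k" and fy: "f y \<ge> k" using k x y by auto
    have "1 / f x - 1 / f y = (f y - f x) / (f x * f y)" using fx fy k by (simp add: field_simps)
    then have "norm (1 / f x - 1 / f y) = \<bar>f x - f y\<bar> / (f x * f y)" using fx fy k by simp
    also have "\<dots> \<le> (L * \<bar>x - y\<bar>) / (k * k)"
      using L(2)[OF x y] fx fy k by (intro frac_le mult_mono) auto
    finally show ?thesis by (simp add: power2_eq_square)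
  qed
  then show ?thesis unfolding lip_def by blast
qed

lemma lip_norm: assumes "lip I f" shows "lip I (\<lambda>x. norm (f x))"
proof -
  obtain L where L: "\<And>x y. x\<in>I \<Longrightarrow> y\<in>I \<Longrightarrow> norm (f x - f y) \<le> L * \<bar>x - y\<bar>" using assms lipE by blast
  have "norm (norm (f x) - norm (f y)) \<le> L * \<bar>x - y\<bar>" if "x\<in>I" "y\<in>I" for x y
    using L[OF that] norm_triangle_ineq3[of "f x" "f y"] by simp
  then show ?thesis unfolding lip_def by blast
qed

lemma lip_subset: "lip I f \<Longrightarrow> J \<subseteq> I \<Longrightarrow> lip J f"
  unfolding lip_def by blast



lemma mvt_vec:
  fixes g :: "real \<Rightarrow> 'a::real_normed_vector"
  assumes d: "\<And>x. x \<in> {p..q} \<Longrightarrow> (g has_vector_derivative g' x) (at x)"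
    and B: "\<And>x. x \<in> {p..q} \<Longrightarrow> norm (g' x) \<le> B"
    and xy: "x \<in> {p..q}" "y \<in> {p..q}"
  shows "norm (g x - g y) \<le> B * \<bar>x - y\<bar>"
proof -
  have "norm (g x - g y) \<le> B * norm (x - y)"
  proof (rule differentiable_bound[of "{p..q}" g "\<lambda>x h. h *\<^sub>R g' x"])
    show "convex {p..q}" by simp
    show "(g has_derivative (\<lambda>h. h *\<^sub>R g' x)) (at x within {p..q})" if "x \<in> {p..q}" for x
      using d[OF that] by (simp add: has_vector_derivative_def has_derivative_at_withinI)
    show "onorm (\<lambda>h. h *\<^sub>R g' x) \<le> B" if "x \<in> {p..q}" for x
      using onorm_scaleR_left[OF bounded_linear_ident, of "g' x"] B[OF that] by (simp add: onorm_id)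
  qed (use xy in auto)
  then show ?thesis by simp
qed

lemma near:
  fixes c c' \<xi>1 \<xi>2 :: "real \<Rightarrow> 'a::real_normed_vector"
  assumes d: "\<And>x. x \<in> {a..b} \<Longrightarrow> (c has_vector_derivative c' x) (at x)"
    and cc: "continuous_on {a..b} c'"
    and l1: "lip {a..b} \<xi>1"
    and th: "\<theta> > 0"
  shows "\<exists>\<delta>>0. \<exists>\<epsilon>>0. \<forall>s\<in>{a..b}. \<forall>t\<in>{a..b}. \<forall>v w. \<bar>s - t\<bar> < \<delta> \<longrightarrow> \<bar>v\<bar> < \<epsilon> \<longrightarrow>
     c s + v *\<^sub>R \<xi>1 s = c t + w *\<^sub>R \<xi>2 t \<longrightarrow>
     norm ((s - t) *\<^sub>R c' t + v *\<^sub>R \<xi>1 t - w *\<^sub>R \<xi>2 t) \<le> \<theta> * \<bar>s - t\<bar>"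
proof -
  have uc: "uniformly_continuous_on {a..b} c'" by (rule compact_uniformly_continuous[OF cc compact_Icc])
  obtain \<delta> where \<delta>: "\<delta> > 0" "\<And>x x'. x\<in>{a..b} \<Longrightarrow> x'\<in>{a..b} \<Longrightarrow> dist x' x < \<delta> \<Longrightarrow> dist (c' x') (c' x) < \<theta>/2"
    using uc th unfolding uniformly_continuous_on_def by (meson half_gt_zero)
  obtain L where L: "L > 0" "\<And>x y. x\<in>{a..b} \<Longrightarrow> y\<in>{a..b} \<Longrightarrow> norm (\<xi>1 x - \<xi>1 y) \<le> L * \<bar>x - y\<bar>"
    using l1 lipE by blast
  define \<epsilon> where "\<epsilon> = \<theta> / (2 * L)"
  have \<epsilon>: "\<epsilon> > 0" using th L by (simp add: \<epsilon>_def)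
  have key: "norm ((s - t) *\<^sub>R c' t + v *\<^sub>R \<xi>1 t - w *\<^sub>R \<xi>2 t) \<le> \<theta> * \<bar>s - t\<bar>"
    if s: "s \<in> {a..b}" and t: "t \<in> {a..b}" and st: "\<bar>s - t\<bar> < \<delta>" and v: "\<bar>v\<bar> < \<epsilon>"
      and eq: "c s + v *\<^sub>R \<xi>1 s = c t + w *\<^sub>R \<xi>2 t" for s t v w
  proof -
    define g where "g x = c x - x *\<^sub>R c' t" for x
    define p where "p = min s t"
    define q where "q = max s t"
    have sub: "{p..q} \<subseteq> {a..b}" using s t by (auto simp: p_def q_def)
    have R: "norm (g s - g t) \<le> (\<theta>/2) * \<bar>s - t\<bar>"
    proof (rule mvt_vec[of p q g "\<lambda>x. c' x - c' t"])
      show "(g has_vector_derivative c' x - c' t) (at x)" if "x \<in> {p..q}" for x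
        unfolding g_def using d[of x] sub that
        by (auto intro!: derivative_eq_intros)
      show "norm (c' x - c' t) \<le> \<theta> / 2" if "x \<in> {p..q}" for x
      proof -
        have "dist x t < \<delta>" using that st by (auto simp: p_def q_def dist_real_def)
        then have "dist (c' x) (c' t) < \<theta>/2" using \<delta>(2)[of t x] sub that t by auto
        then show ?thesis by (simp add: dist_norm)
      qed
    qed (auto simp: p_def q_def)
    have X: "(s - t) *\<^sub>R c' t + v *\<^sub>R \<xi>1 t - w *\<^sub>R \<xi>2 t = - ((g s - g t) + v *\<^sub>R (\<xi>1 s - \<xi>1 t))"
      using eq unfolding g_def by (simp add: algebra_simps)
    have h1: "norm ((s - t) *\<^sub>R c' t + v *\<^sub>R \<xi>1 t - w *\<^sub>R \<xi>2 t) \<le> norm (g s - g t) + norm (v *\<^sub>R (\<xi>1 s - \<xi>1 t))"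
      unfolding X norm_minus_cancel by (rule norm_triangle_ineq)
    have h2: "norm (v *\<^sub>R (\<xi>1 s - \<xi>1 t)) \<le> \<epsilon> * (L * \<bar>s - t\<bar>)"
      using v L(2)[OF s t] by (simp only: norm_scaleR) (intro mult_mono, auto)
    have h3: "\<epsilon> * (L * \<bar>s - t\<bar>) = (\<theta>/2) * \<bar>s - t\<bar>" using L by (simp add: \<epsilon>_def)
    show ?thesis using R h1 h2 h3 by linarith
  qed
  show ?thesis using key \<delta>(1) \<epsilon> by blast
qed

lemma far:
  fixes c :: "real \<Rightarrow> 'a::real_normed_vector"
  assumes P: "compact P" and cc: "continuous_on UNIV c" and ne: "\<And>s t. (s, t) \<in> P \<Longrightarrow> c s \<noteq> c t"
  shows "\<exists>\<eta>>0. \<forall>s t. (s, t) \<in> P \<longrightarrow> norm (c s - c t) \<ge> \<eta>"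
proof (cases "P = {}")
  case True then show ?thesis by (intro exI[of _ 1]) auto
next
  case False
  have cont: "continuous_on P (\<lambda>p. norm (c (fst p) - c (snd p)))"
    by (intro continuous_intros continuous_on_compose2[OF cc continuous_on_fst]
        continuous_on_compose2[OF cc continuous_on_snd]) auto
  obtain p0 where p0: "p0 \<in> P" "\<And>p. p \<in> P \<Longrightarrow> norm (c (fst p0) - c (snd p0)) \<le> norm (c (fst p) - c (snd p))"
    using continuous_attains_inf[OF P False cont] by blast
  have "norm (c (fst p0) - c (snd p0)) > 0" using ne[of "fst p0" "snd p0"] p0(1) by simp
  then show ?thesis using p0(2) by (intro exI[of _ "norm (c (fst p0) - c (snd p0))"]) fastforce
qed

lemma indep:
  fixes G :: "real \<Rightarrow> 'z::euclidean_space \<Rightarrow> 'v::real_normed_vector"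
  assumes I: "compact I" and cont: "continuous_on (I \<times> UNIV) (\<lambda>p. G (fst p) (snd p))"
    and nz: "\<And>t z. t \<in> I \<Longrightarrow> G t z = 0 \<Longrightarrow> z = 0"
    and hom: "\<And>t r z. G t (r *\<^sub>R z) = r *\<^sub>R G t z"
  shows "\<exists>m>0. \<forall>t\<in>I. \<forall>z. norm (G t z) \<ge> m * norm z"
proof (cases "I = {}")
  case True then show ?thesis by (intro exI[of _ 1]) auto
next
  case False
  define K where "K = I \<times> sphere (0::'z) 1"
  have K: "compact K" unfolding K_def by (intro compact_Times I compact_sphere)
  obtain b :: 'z where b: "b \<in> Basis" using nonempty_Basis by blast
  have Kne: "K \<noteq> {}" using False b unfolding K_def by (auto simp: norm_Basis)
  have cK: "continuous_on K (\<lambda>p. norm (G (fst p) (snd p)))"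
    by (intro continuous_intros continuous_on_subset[OF cont]) (auto simp: K_def)
  obtain p0 where p0: "p0 \<in> K" "\<And>p. p \<in> K \<Longrightarrow> norm (G (fst p0) (snd p0)) \<le> norm (G (fst p) (snd p))"
    using continuous_attains_inf[OF K Kne cK] by blast
  define m where "m = norm (G (fst p0) (snd p0))"
  have "m > 0" using nz[of "fst p0" "snd p0"] p0(1) unfolding m_def K_def by auto
  moreover have "norm (G t z) \<ge> m * norm z" if t: "t \<in> I" for t z
  proof (cases "z = 0")
    case True then show ?thesis using hom[of t 0 0] by simp
  next
    case False
    define u where "u = (1 / norm z) *\<^sub>R z"
    have u: "(t, u) \<in> K" using False t by (simp add: K_def u_def)
    have zu: "z = norm z *\<^sub>R u" using False by (simp add: u_def)
    have "norm (G t z) = norm z * norm (G t u)" by (subst zu, simp add: hom)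
    moreover have "m \<le> norm (G t u)" using p0(2)[OF u] by (simp add: m_def)
    ultimately show ?thesis by (metis mult.commute mult_left_mono norm_ge_zero)
  qed
  ultimately show ?thesis by blast
qed

lemma assemble:
  fixes c c' \<xi>1 \<xi>2 :: "real \<Rightarrow> 'a::real_normed_vector"
  assumes d: "\<And>x. x \<in> {a..b} \<Longrightarrow> (c has_vector_derivative c' x) (at x)"
    and cc: "continuous_on {a..b} c'"
    and l1: "lip {a..b} \<xi>1"
    and n1: "\<And>x. x \<in> {a..b} \<Longrightarrow> norm (\<xi>1 x) \<le> 1"
    and n2: "\<And>x. x \<in> {a..b} \<Longrightarrow> norm (\<xi>2 x) \<le> 1"
    and Q: "compact Q" "Q \<subseteq> {a..b} \<times> {a..b}"
    and inj: "\<And>s t. (s, t) \<in> Q \<Longrightarrow> c s = c t \<Longrightarrow> s = t"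
    and ccont: "continuous_on UNIV c"
    and th: "\<theta> > 0"
  shows "\<exists>\<epsilon>>0. \<forall>s t v w. (s, t) \<in> Q \<longrightarrow> \<bar>v\<bar> < \<epsilon> \<longrightarrow> \<bar>w\<bar> < \<epsilon> \<longrightarrow>
     c s + v *\<^sub>R \<xi>1 s = c t + w *\<^sub>R \<xi>2 t \<longrightarrow>
     norm ((s - t) *\<^sub>R c' t + v *\<^sub>R \<xi>1 t - w *\<^sub>R \<xi>2 t) \<le> \<theta> * \<bar>s - t\<bar>"
proof -
  obtain \<delta> \<epsilon>1 where \<delta>: "\<delta> > 0" "\<epsilon>1 > 0" and N: "\<forall>s\<in>{a..b}. \<forall>t\<in>{a..b}. \<forall>v w. \<bar>s - t\<bar> < \<delta> \<longrightarrow> \<bar>v\<bar> < \<epsilon>1 \<longrightarrow>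
     c s + v *\<^sub>R \<xi>1 s = c t + w *\<^sub>R \<xi>2 t \<longrightarrow>
     norm ((s - t) *\<^sub>R c' t + v *\<^sub>R \<xi>1 t - w *\<^sub>R \<xi>2 t) \<le> \<theta> * \<bar>s - t\<bar>"
    using near[OF d cc l1 th] by blast
  define P where "P = Q \<inter> {p. \<delta> \<le> \<bar>fst p - snd p\<bar>}"
  have P: "compact P" unfolding P_def
    by (intro compact_Int_closed Q(1) closed_Collect_le continuous_intros)
  have "c s \<noteq> c t" if "(s, t) \<in> P" for s t
    using that inj[of s t] \<delta>(1) by (auto simp: P_def)
  then obtain \<eta> where \<eta>: "\<eta> > 0" "\<And>s t. (s, t) \<in> P \<Longrightarrow> norm (c s - c t) \<ge> \<eta>"
    using far[OF P ccont] by blast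
  define \<epsilon> where "\<epsilon> = min \<epsilon>1 (\<eta>/2)"
  have "\<epsilon> > 0" using \<delta> \<eta> by (simp add: \<epsilon>_def)
  moreover have "norm ((s - t) *\<^sub>R c' t + v *\<^sub>R \<xi>1 t - w *\<^sub>R \<xi>2 t) \<le> \<theta> * \<bar>s - t\<bar>"
    if st: "(s, t) \<in> Q" and v: "\<bar>v\<bar> < \<epsilon>" and w: "\<bar>w\<bar> < \<epsilon>" and eq: "c s + v *\<^sub>R \<xi>1 s = c t + w *\<^sub>R \<xi>2 t" for s t v w
  proof (cases "\<bar>s - t\<bar> < \<delta>")
    case True
    then show ?thesis using N st Q(2) v eq by (auto simp: \<epsilon>_def)
  next
    case False
    then have "(s, t) \<in> P" using st by (auto simp: P_def)
    then have "norm (c s - c t) \<ge> \<eta>" by (rule \<eta>(2))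
    moreover have "c s - c t = w *\<^sub>R \<xi>2 t - v *\<^sub>R \<xi>1 s" using eq by (simp add: algebra_simps)
    moreover have "norm (w *\<^sub>R \<xi>2 t - v *\<^sub>R \<xi>1 s) \<le> \<bar>w\<bar> + \<bar>v\<bar>"
    proof -
      have "norm (w *\<^sub>R \<xi>2 t - v *\<^sub>R \<xi>1 s) \<le> norm (w *\<^sub>R \<xi>2 t) + norm (v *\<^sub>R \<xi>1 s)" by (rule norm_triangle_ineq4)
      also have "\<dots> \<le> \<bar>w\<bar> * 1 + \<bar>v\<bar> * 1"
      proof -
        have "s \<in> {a..b}" "t \<in> {a..b}" using st Q(2) by auto
        then have "norm (\<xi>1 s) \<le> 1" "norm (\<xi>2 t) \<le> 1" using n1 n2 by auto
        then show ?thesis using mult_left_le[of "norm (\<xi>2 t)" "\<bar>w\<bar>"] mult_left_le[of "norm (\<xi>1 s)" "\<bar>v\<bar>"] by simp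
      qed
      finally show ?thesis by simp
    qed
    ultimately show ?thesis using v w by (simp add: \<epsilon>_def)
  qed
  ultimately show ?thesis by blast
qed



definition ON :: "'a::real_inner \<Rightarrow> 'a \<Rightarrow> 'a \<Rightarrow> bool" where
  "ON e n b \<longleftrightarrow> e \<bullet> e = 1 \<and> n \<bullet> n = 1 \<and> b \<bullet> b = 1 \<and> e \<bullet> n = 0 \<and> e \<bullet> b = 0 \<and> n \<bullet> b = 0"

lemma ON_dots:
  assumes "ON e n b"
  shows "e \<bullet> e = 1" "n \<bullet> n = 1" "b \<bullet> b = 1" "e \<bullet> n = 0" "e \<bullet> b = 0" "n \<bullet> b = 0"
        "n \<bullet> e = 0" "b \<bullet> e = 0" "b \<bullet> n = 0"
  using assms unfolding ON_def by (auto simp: inner_commute)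

lemma frame_norm:
  assumes on: "ON e n b" and "cb^2 + sb^2 = 1" "ca^2 + sa^2 = 1"
  shows "norm (cb *\<^sub>R e + sb *\<^sub>R (ca *\<^sub>R n + sa *\<^sub>R b)) = 1"
proof -
  let ?x = "cb *\<^sub>R e + sb *\<^sub>R (ca *\<^sub>R n + sa *\<^sub>R b)"
  have "?x \<bullet> ?x = cb^2 + sb^2 * (ca^2 + sa^2)"
    using ON_dots[OF on]
    by (simp add: inner_add_left inner_add_right power2_eq_square algebra_simps)
  then have "?x \<bullet> ?x = 1" using assms by simp
  then show ?thesis by (simp add: norm_eq_sqrt_inner)
qed

lemma frame_indep1:
  assumes on: "ON e n b" and sb: "sb \<noteq> 0" and a1: "ca^2 + sa^2 = 1"
    and eq: "a *\<^sub>R e + x *\<^sub>R (cb *\<^sub>R e + sb *\<^sub>R (ca *\<^sub>R n + sa *\<^sub>R b)) = 0"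
  shows "a = 0 \<and> x = 0"
proof -
  have "(a *\<^sub>R e + x *\<^sub>R (cb *\<^sub>R e + sb *\<^sub>R (ca *\<^sub>R n + sa *\<^sub>R b))) \<bullet> n = 0"
       "(a *\<^sub>R e + x *\<^sub>R (cb *\<^sub>R e + sb *\<^sub>R (ca *\<^sub>R n + sa *\<^sub>R b))) \<bullet> b = 0"
       "(a *\<^sub>R e + x *\<^sub>R (cb *\<^sub>R e + sb *\<^sub>R (ca *\<^sub>R n + sa *\<^sub>R b))) \<bullet> e = 0"
    using eq by simp_all
  then have h: "x * sb * ca = 0" "x * sb * sa = 0" "a + x * cb = 0"
    using ON_dots[OF on] by (simp_all add: inner_add_left algebra_simps)
  have "(x * sb)^2 * (ca^2 + sa^2) = 0" using h(1,2) by (auto simp: power2_eq_square algebra_simps)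
  then have "x * sb = 0" using a1 by simp
  then have "x = 0" using sb by simp
  then show ?thesis using h(3) by simp
qed

lemma frame_indep2:
  assumes on: "ON e n b" and sb: "sb \<noteq> 0" and sd: "sd \<noteq> 0" and ca: "ca \<noteq> 0" and sa: "sa \<noteq> 0"
    and eq: "a *\<^sub>R e + x *\<^sub>R (cb *\<^sub>R e + sb *\<^sub>R (ca *\<^sub>R n + sa *\<^sub>R b))
              - y *\<^sub>R (cd *\<^sub>R e + sd *\<^sub>R (ca *\<^sub>R n + (- sa) *\<^sub>R b)) = 0"
  shows "a = 0 \<and> x = 0 \<and> y = 0"
proof -
  let ?X = "a *\<^sub>R e + x *\<^sub>R (cb *\<^sub>R e + sb *\<^sub>R (ca *\<^sub>R n + sa *\<^sub>R b))
              - y *\<^sub>R (cd *\<^sub>R e + sd *\<^sub>R (ca *\<^sub>R n + (- sa) *\<^sub>R b))"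
  have "?X \<bullet> n = 0" "?X \<bullet> b = 0" "?X \<bullet> e = 0" using eq by simp_all
  then have h: "(x * sb - y * sd) * ca = 0" "(x * sb + y * sd) * sa = 0" "a + x * cb - y * cd = 0"
    using ON_dots[OF on] by (simp_all add: inner_add_left inner_diff_left algebra_simps)
  then have "x * sb - y * sd = 0" "x * sb + y * sd = 0" using ca sa by simp_all
  then have "x * sb = 0" "y * sd = 0" by linarith+
  then have "x = 0" "y = 0" using sb sd by simp_all
  then show ?thesis using h(3) by simp
qed



locale crv =
  fixes cl :: bool and l :: real and c :: "real \<Rightarrow> real^3"
  assumes curve: "arclength_embedded_curve cl l c"
    and kpos: "\<forall>s\<in>Jdom cl l. curvature c s > 0"
begin

definition "a0 = (if cl then -l else -l/2)"
definition "b0 = (if cl then 2*l else l/2)"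

lemma lpos: "l > 0" using curve by (simp add: arclength_embedded_curve_def)
lemma smooth: "smooth_fn c" using curve by (simp add: arclength_embedded_curve_def)
lemma unit: "s \<in> Jdom cl l \<Longrightarrow> norm (vderiv c s) = 1" using curve by (simp add: arclength_embedded_curve_def)
lemma I_sub: "{a0..b0} \<subseteq> Jdom cl l" by (auto simp: a0_def b0_def Jdom_def)
lemma ab: "a0 < b0" using lpos by (auto simp: a0_def b0_def)

lemma dif: "((vderiv ^^ n) c) differentiable (at x)"
  using smooth by (simp add: smooth_fn_def)

lemma d1: "(c has_vector_derivative vderiv c x) (at x)"
  using dif[of 0 x] unfolding vderiv_def by (simp add: vector_derivative_works)
lemma d2: "(vderiv c has_vector_derivative vderiv (vderiv c) x) (at x)"
  using dif[of 1 x] unfolding vderiv_def by (simp add: vector_derivative_works)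
lemma d3: "(vderiv (vderiv c) has_vector_derivative vderiv (vderiv (vderiv c)) x) (at x)"
  using dif[of 2 x] unfolding vderiv_def by (simp add: vector_derivative_works numeral_2_eq_2)
lemma d4: "(vderiv (vderiv (vderiv c))) differentiable (at x)"
  using dif[of 3 x] by (simp add: numeral_3_eq_3)

lemma cont_of: "(\<And>x. f differentiable (at x)) \<Longrightarrow> continuous_on S f"
  by (meson continuous_at_imp_continuous_on differentiable_imp_continuous_within)

lemma cont0: "continuous_on S c" by (rule cont_of) (use d1 in \<open>auto simp: has_vector_derivative_def differentiable_def\<close>)
lemma cont1: "continuous_on S (vderiv c)" by (rule cont_of) (use d2 in \<open>auto simp: has_vector_derivative_def differentiable_def\<close>)
lemma cont2: "continuous_on S (vderiv (vderiv c))" by (rule cont_of) (use d3 in \<open>auto simp: has_vector_derivative_def differentiable_def\<close>)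
lemma cont3: "continuous_on S (vderiv (vderiv (vderiv c)))" by (rule cont_of) (use d4 in auto)

lemma perp: assumes x: "x \<in> Jdom cl l" shows "vderiv c x \<bullet> vderiv (vderiv c) x = 0"
proof -
  let ?J = "Jdom cl l"
  define h where "h y = vderiv c y \<bullet> vderiv c y" for y
  have hd: "(h has_vector_derivative (vderiv c x \<bullet> vderiv (vderiv c) x + vderiv (vderiv c) x \<bullet> vderiv c x)) (at x within ?J)"
    unfolding h_def
    by (rule bounded_bilinear.has_vector_derivative[OF bounded_bilinear_inner];
        rule has_vector_derivative_at_within[OF d2])
  have h1: "h y = 1" if "y \<in> ?J" for y
    using unit[OF that] by (simp add: h_def power2_norm_eq_inner[symmetric])
  have h0: "(h has_vector_derivative 0) (at x within ?J)"
    by (rule has_vector_derivative_transform[OF x, of h "\<lambda>_. 1"]) (use h1 in auto)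
  have "vderiv c x \<bullet> vderiv (vderiv c) x + vderiv (vderiv c) x \<bullet> vderiv c x = 0"
  proof (cases cl)
    case True
    then have "?J = UNIV" by (simp add: Jdom_def)
    then have "(h has_vector_derivative (vderiv c x \<bullet> vderiv (vderiv c) x + vderiv (vderiv c) x \<bullet> vderiv c x)) (at x)"
      "(h has_vector_derivative 0) (at x)" using hd h0 by simp_all
    then show ?thesis using vector_derivative_unique_within[OF at_neq_bot] by blast
  next
    case False
    then have J: "?J = cbox (-l/2) (l/2)" unfolding Jdom_def using interval_cbox by simp
    have "-l/2 < l/2" using lpos by simp
    moreover have "x \<in> cbox (-l/2) (l/2)" using x J by simp
    ultimately show ?thesis
      using vector_derivative_unique_within_closed_interval[of "-l/2" "l/2" x h] hd h0 unfolding J by blast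
  qed
  then show ?thesis by (simp add: inner_commute)
qed

lemma ON_frame: assumes x: "x \<in> Jdom cl l"
  shows "ON (tangent c x) (principal_normal c x) (binormal c x)"
proof -
  let ?e = "vderiv c x" and ?k = "curvature c x" and ?c2 = "vderiv (vderiv c) x"
  have k: "?k > 0" using kpos x by auto
  have kk: "?k = norm ?c2" by (simp add: curvature_def)
  have ee: "?e \<bullet> ?e = 1" using unit[OF x] by (simp add: power2_norm_eq_inner[symmetric])
  have nn: "principal_normal c x \<bullet> principal_normal c x = 1"
    using k unfolding principal_normal_def kk
    by (simp add: power2_norm_eq_inner[symmetric] power2_eq_square)
  have en: "tangent c x \<bullet> principal_normal c x = 0"
    using perp[OF x] by (simp add: tangent_def principal_normal_def)
  have nrm: "norm (tangent c x) = 1" "norm (principal_normal c x) = 1"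
    using unit[OF x] nn by (simp_all add: tangent_def norm_eq_sqrt_inner)
  have bb: "binormal c x \<bullet> binormal c x = 1"
    using norm_cross_dot[of "tangent c x" "principal_normal c x"] nrm en
    by (simp add: binormal_def power2_norm_eq_inner[symmetric])
  show ?thesis unfolding ON_def
    using ee nn en bb unfolding tangent_def binormal_def by (simp add: dot_cross_self)
qed

lemma lip_T: "lip {a0..b0} (tangent c)"
  unfolding tangent_def[abs_def] by (rule lip_deriv[OF d2 cont2])

lemma lip_c2: "lip {a0..b0} (vderiv (vderiv c))"
  by (rule lip_deriv[OF d3 cont3])

lemma lip_N: "lip {a0..b0} (principal_normal c)"
proof -
  have lk: "lip {a0..b0} (curvature c)" unfolding curvature_def[abs_def] by (rule lip_norm[OF lip_c2])
  have ne: "{a0..b0} \<noteq> {}" using ab by simp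
  obtain x0 where x0: "x0 \<in> {a0..b0}" "\<And>y. y \<in> {a0..b0} \<Longrightarrow> curvature c x0 \<le> curvature c y"
    using continuous_attains_inf[OF compact_Icc ne lip_cont[OF lk]] by blast
  have k0: "curvature c x0 > 0" using kpos I_sub x0(1) by auto
  have li: "lip {a0..b0} (\<lambda>x. 1 / curvature c x)" by (rule lip_inv[OF lk k0 x0(2)])
  show ?thesis unfolding principal_normal_def[abs_def]
    by (rule lip_bilin[OF bounded_bilinear_scaleR li lip_c2 compact_Icc])
qed

lemma bb_cross: "bounded_bilinear (cross3 :: real^3 \<Rightarrow> real^3 \<Rightarrow> real^3)"
  using bilinear_cross bilinear_conv_bounded_bilinear by blast

lemma lip_B: "lip {a0..b0} (binormal c)"
  unfolding binormal_def[abs_def] by (rule lip_bilin[OF bb_cross lip_T lip_N compact_Icc])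

end


lemma periodic_int: assumes "periodic l f" shows "f (x + of_int k * l) = f x"
proof -
  have pn: "f (y + real n * l) = f y" for y n
  proof (induction n)
    case (Suc n)
    have "f (y + real (Suc n) * l) = f ((y + real n * l) + l)" by (simp add: algebra_simps)
    also have "\<dots> = f (y + real n * l)" using assms by (simp add: periodic_def)
    finally show ?case using Suc by simp
  qed simp
  show ?thesis
  proof (cases "k \<ge> 0")
    case True
    then obtain n where "k = int n" by (metis nonneg_eq_int)
    then show ?thesis using pn by simp
  next
    case False
    then have "-k \<ge> 0" by simp
    then obtain n where "-k = int n" by (metis nonneg_eq_int)
    then have n: "k = - int n" by simp
    have "f x = f ((x - real n * l) + real n * l)" by simp
    also have "\<dots> = f (x - real n * l)" by (rule pn)
    finally show ?thesis using n by simp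
  qed
qed

lemma periodic_vderiv:
  fixes f :: "real \<Rightarrow> 'a::real_normed_vector"
  assumes p: "periodic l f" and d: "\<And>x. f differentiable (at x)"
  shows "periodic l (vderiv f)"
  unfolding periodic_def
proof
  fix s
  have D: "(f has_vector_derivative vderiv f (s + l)) (at (s + l))"
    using d[of "s + l"] unfolding vderiv_def by (simp add: vector_derivative_works)
  have sh: "((\<lambda>x. x + l) has_vector_derivative 1) (at s)"
    by (auto intro!: derivative_eq_intros)
  have "((f \<circ> (\<lambda>x. x + l)) has_vector_derivative (1 *\<^sub>R vderiv f (s + l))) (at s)"
    by (rule vector_diff_chain_at[OF sh]) (use D in simp)
  moreover have "f \<circ> (\<lambda>x. x + l) = f" using p by (auto simp: periodic_def)
  ultimately have "(f has_vector_derivative vderiv f (s + l)) (at s)" by simp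
  then show "vderiv f (s + l) = vderiv f s" unfolding vderiv_def by (simp add: vector_derivative_at)
qed

lemma smooth_d: "smooth_fn f \<Longrightarrow> (f has_vector_derivative vderiv f x) (at x)"
  unfolding smooth_fn_def vderiv_def
  by (metis funpow_0 vector_derivative_works)

lemma smooth_cont: "smooth_fn f \<Longrightarrow> continuous_on S f"
  unfolding smooth_fn_def
  by (metis funpow_0 continuous_at_imp_continuous_on differentiable_imp_continuous_within)

lemma smooth_cont1: "smooth_fn f \<Longrightarrow> continuous_on S (vderiv f)"
  unfolding smooth_fn_def
  by (metis funpow_0 funpow_Suc_right o_apply continuous_at_imp_continuous_on differentiable_imp_continuous_within)

lemma lip_cos: assumes f: "smooth_fn (f :: real \<Rightarrow> real)" shows "lip {a..b} (\<lambda>x. cos (f x))"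
proof (rule lip_deriv)
  fix x
  have "(f has_real_derivative vderiv f x) (at x)"
    using smooth_d[OF f] by (simp add: has_real_derivative_iff_has_vector_derivative)
  then have "((\<lambda>x. cos (f x)) has_real_derivative (- sin (f x) * vderiv f x)) (at x)"
    by (auto intro!: derivative_eq_intros)
  then show "((\<lambda>x. cos (f x)) has_vector_derivative (- sin (f x) * vderiv f x)) (at x)"
    by (simp add: has_real_derivative_iff_has_vector_derivative)
next
  show "continuous_on {a..b} (\<lambda>x. - sin (f x) * vderiv f x)"
    using smooth_cont[OF f] smooth_cont1[OF f] by (auto intro!: continuous_intros)
qed

lemma lip_sin: assumes f: "smooth_fn (f :: real \<Rightarrow> real)" shows "lip {a..b} (\<lambda>x. sin (f x))"
proof (rule lip_deriv)
  fix x
  have "(f has_real_derivative vderiv f x) (at x)"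
    using smooth_d[OF f] by (simp add: has_real_derivative_iff_has_vector_derivative)
  then have "((\<lambda>x. sin (f x)) has_real_derivative (cos (f x) * vderiv f x)) (at x)"
    by (auto intro!: derivative_eq_intros)
  then show "((\<lambda>x. sin (f x)) has_vector_derivative (cos (f x) * vderiv f x)) (at x)"
    by (simp add: has_real_derivative_iff_has_vector_derivative)
next
  show "continuous_on {a..b} (\<lambda>x. cos (f x) * vderiv f x)"
    using smooth_cont[OF f] smooth_cont1[OF f] by (auto intro!: continuous_intros)
qed

lemma mod_red: assumes "l > (0::real)"
  shows "0 \<le> x - of_int \<lfloor>x / l\<rfloor> * l" "x - of_int \<lfloor>x / l\<rfloor> * l < l"
proof -
  have a: "of_int \<lfloor>x / l\<rfloor> \<le> x / l" by (rule of_int_floor_le)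
  have b: "x / l < of_int \<lfloor>x / l\<rfloor> + 1" by (rule real_of_int_floor_add_one_gt)
  from a assms have "of_int \<lfloor>x / l\<rfloor> * l \<le> x" by (simp add: le_divide_eq)
  then show "0 \<le> x - of_int \<lfloor>x / l\<rfloor> * l" by simp
  from b assms have "x < (of_int \<lfloor>x / l\<rfloor> + 1) * l" by (simp only: divide_less_eq)
  then show "x - of_int \<lfloor>x / l\<rfloor> * l < l" by (simp add: algebra_simps)
qed

context crv begin

definition "Q = (if cl then ({0..l} \<times> {-l..2*l}) \<inter> {p. fst p - l/2 \<le> snd p \<and> snd p \<le> fst p + l/2}
               else {-l/2..l/2} \<times> {-l/2..l/2})"

lemma Q_compact: "compact Q"
  unfolding Q_def
  by (auto intro!: compact_Int_closed compact_Times closed_Collect_conj closed_Collect_le continuous_intros)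

lemma Q_sub: "Q \<subseteq> {a0..b0} \<times> {a0..b0}"
  using lpos by (auto simp: Q_def a0_def b0_def)

lemma per_c: "cl \<Longrightarrow> periodic l c" using curve by (simp add: arclength_embedded_curve_def)

lemma Q_inj: assumes st: "(s, t) \<in> Q" and eq: "c s = c t" shows "s = t"
proof (cases cl)
  case False
  then have "inj_on c {-l/2..l/2}" using curve by (simp add: arclength_embedded_curve_def)
  then show ?thesis using st eq False unfolding Q_def by (auto simp: inj_on_def)
next
  case True
  have inj: "inj_on c {0..<l}" using curve True by (simp add: arclength_embedded_curve_def)
  have p: "periodic l c" using per_c True .
  define s0 where "s0 = s - of_int \<lfloor>s / l\<rfloor> * l"
  define t0 where "t0 = t - of_int \<lfloor>t / l\<rfloor> * l"
  have s0: "s0 \<in> {0..<l}" using mod_red[OF lpos, of s] by (simp add: s0_def)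
  have t0: "t0 \<in> {0..<l}" using mod_red[OF lpos, of t] by (simp add: t0_def)
  have "c s0 = c s" unfolding s0_def using periodic_int[OF p, of s "- \<lfloor>s / l\<rfloor>"] by simp
  moreover have "c t0 = c t" unfolding t0_def using periodic_int[OF p, of t "- \<lfloor>t / l\<rfloor>"] by simp
  ultimately have "s0 = t0" using inj s0 t0 eq by (auto simp: inj_on_def)
  then have k: "s - t = of_int (\<lfloor>s / l\<rfloor> - \<lfloor>t / l\<rfloor>) * l" by (simp add: s0_def t0_def algebra_simps)
  define k where "k = \<lfloor>s / l\<rfloor> - \<lfloor>t / l\<rfloor>"
  have "s - l/2 \<le> t \<and> t \<le> s + l/2" using st True unfolding Q_def by auto
  then have "\<bar>s - t\<bar> \<le> l / 2" by linarith
  then have "\<bar>of_int k\<bar> * l \<le> l / 2" using k lpos by (simp add: k_def abs_mult)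
  then have "\<bar>of_int k\<bar> \<le> (1::real) / 2" using lpos by (simp add: field_simps)
  then have "k = 0" by linarith
  then show ?thesis using k by (simp add: k_def)
qed

lemma reduce: assumes "s \<in> Jdom cl l" "t \<in> Jdom cl l"
  shows "\<exists>k1 k2::int. (s + of_int k1 * l, t + of_int k2 * l) \<in> Q \<and> (\<not> cl \<longrightarrow> k1 = 0 \<and> k2 = 0)"
proof (cases cl)
  case False
  then show ?thesis using assms unfolding Q_def Jdom_def by (intro exI[of _ 0]) auto
next
  case True
  define k1 where "k1 = - \<lfloor>s / l\<rfloor>"
  define s' where "s' = s + of_int k1 * l"
  define k2 where "k2 = - \<lfloor>(t - s' + l/2) / l\<rfloor>"
  define t' where "t' = t + of_int k2 * l"
  have s': "0 \<le> s'" "s' < l" using mod_red[OF lpos, of s] by (simp_all add: s'_def k1_def)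
  have t': "0 \<le> t' - s' + l/2" "t' - s' + l/2 < l"
    using mod_red[OF lpos, of "t - s' + l/2"] by (simp_all add: t'_def k2_def algebra_simps)
  have "(s', t') \<in> Q" using True s' t' unfolding Q_def by auto
  then show ?thesis using True unfolding s'_def t'_def by blast
qed

lemma per_T: "cl \<Longrightarrow> periodic l (vderiv c)"
  by (rule periodic_vderiv[OF per_c]) (use d1 in \<open>auto simp: has_vector_derivative_def differentiable_def\<close>)
lemma per_c2: "cl \<Longrightarrow> periodic l (vderiv (vderiv c))"
  by (rule periodic_vderiv[OF per_T]) (use d2 in \<open>auto simp: has_vector_derivative_def differentiable_def\<close>)

lemma per_ruling:
  assumes "cl" "periodic l \<alpha>" "periodic l \<beta>"
  shows "ruling c \<alpha> \<beta> (s + l) = ruling c \<alpha> \<beta> s"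
  using per_T[OF assms(1)] per_c2[OF assms(1)] assms(2,3)
  by (simp add: periodic_def ruling_def tangent_def principal_normal_def binormal_def curvature_def)

lemma per_strip:
  assumes "cl" "periodic l \<alpha>" "periodic l \<beta>"
  shows "strip c \<alpha> \<beta> (s + of_int k * l, v) = strip c \<alpha> \<beta> (s, v)"
proof -
  have "periodic l (\<lambda>s. c s + v *\<^sub>R ruling c \<alpha> \<beta> s)"
    using per_c[OF assms(1)] per_ruling[OF assms] by (simp add: periodic_def)
  then show ?thesis using periodic_int by (simp add: strip_def) 
qed

lemma nf_facts:
  assumes nf: "normal_form cl l c \<alpha> \<beta>"
  shows "lip {a0..b0} (ruling c \<alpha> \<beta>)"
    and "\<And>s. s \<in> Jdom cl l \<Longrightarrow> norm (ruling c \<alpha> \<beta> s) = 1"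
    and "\<And>s. s \<in> Jdom cl l \<Longrightarrow> sin (\<beta> s) > 0 \<and> cos (\<alpha> s) \<noteq> 0 \<and> sin (\<alpha> s) \<noteq> 0"
    and "cl \<Longrightarrow> periodic l \<alpha> \<and> periodic l \<beta>"
proof -
  have sa: "smooth_fn \<alpha>" and sb: "smooth_fn \<beta>" using nf by (simp_all add: normal_form_def)
  show "lip {a0..b0} (ruling c \<alpha> \<beta>)"
    unfolding ruling_def[abs_def]
    by (intro lip_add lip_bilin[OF bounded_bilinear_scaleR] lip_cos lip_sin sa sb lip_T lip_N lip_B compact_Icc)
  show "cl \<Longrightarrow> periodic l \<alpha> \<and> periodic l \<beta>" using nf by (simp add: normal_form_def)
  fix s assume s: "s \<in> Jdom cl l"
  have cond: "0 < \<bar>\<alpha> s\<bar>" "\<bar>\<alpha> s\<bar> < pi/2" "0 < \<beta> s" "\<beta> s < pi" using nf s by (auto simp: normal_form_def)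
  show "norm (ruling c \<alpha> \<beta> s) = 1"
    unfolding ruling_def by (rule frame_norm[OF ON_frame[OF s]]) simp_all
  have "sin (\<beta> s) > 0" using cond by (intro sin_gt_zero) auto
  moreover have "cos (\<alpha> s) > 0" using cond by (intro cos_gt_zero_pi) auto
  moreover have "sin (\<alpha> s) \<noteq> 0"
  proof (cases "\<alpha> s > 0")
    case True
    have "\<alpha> s < pi" using cond pi_gt_zero by linarith
    then show ?thesis using True sin_gt_zero by (metis less_irrefl)
  next
    case False
    then have "sin (- \<alpha> s) > 0" using cond by (intro sin_gt_zero) auto
    then show ?thesis by simp
  qed
  ultimately show "sin (\<beta> s) > 0 \<and> cos (\<alpha> s) \<noteq> 0 \<and> sin (\<alpha> s) \<noteq> 0" by simp
qed

end


lemma cont_fst_comp: "continuous_on I f \<Longrightarrow> continuous_on (I \<times> X) (\<lambda>p. f (fst p))"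
  by (rule continuous_on_compose2[OF _ continuous_on_fst]) auto

context crv begin

lemma pair:
  fixes \<xi>1 \<xi>2 :: "real \<Rightarrow> real^3" and Z :: "real \<Rightarrow> real \<Rightarrow> 'z::real_normed_vector"
  assumes l1: "lip {a0..b0} \<xi>1"
    and n1: "\<And>s. s \<in> Jdom cl l \<Longrightarrow> norm (\<xi>1 s) = 1"
    and n2: "\<And>s. s \<in> Jdom cl l \<Longrightarrow> norm (\<xi>2 s) = 1"
    and p1: "cl \<Longrightarrow> periodic l \<xi>1" and p2: "cl \<Longrightarrow> periodic l \<xi>2"
    and m: "m > 0" "\<And>t a v w. t \<in> {a0..b0} \<Longrightarrow> norm (a *\<^sub>R vderiv c t + v *\<^sub>R \<xi>1 t - w *\<^sub>R \<xi>2 t) \<ge> m * norm (a, Z v w)"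
  shows "\<exists>\<epsilon>>0. \<forall>s\<in>Jdom cl l. \<forall>t\<in>Jdom cl l. \<forall>v w. \<bar>v\<bar> < \<epsilon> \<longrightarrow> \<bar>w\<bar> < \<epsilon> \<longrightarrow>
     c s + v *\<^sub>R \<xi>1 s = c t + w *\<^sub>R \<xi>2 t \<longrightarrow> Jeq cl l s t \<and> Z v w = 0"
proof -
  have th: "m / 2 > 0" using m by simp
  obtain \<epsilon> where \<epsilon>: "\<epsilon> > 0" and A: "\<forall>s t v w. (s, t) \<in> Q \<longrightarrow> \<bar>v\<bar> < \<epsilon> \<longrightarrow> \<bar>w\<bar> < \<epsilon> \<longrightarrow>
     c s + v *\<^sub>R \<xi>1 s = c t + w *\<^sub>R \<xi>2 t \<longrightarrow>
     norm ((s - t) *\<^sub>R vderiv c t + v *\<^sub>R \<xi>1 t - w *\<^sub>R \<xi>2 t) \<le> (m/2) * \<bar>s - t\<bar>"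
  proof -
    have a: "norm (\<xi>1 x) \<le> 1" if "x \<in> {a0..b0}" for x using n1 I_sub that by auto
    have b: "norm (\<xi>2 x) \<le> 1" if "x \<in> {a0..b0}" for x using n2 I_sub that by auto
    have "\<exists>\<epsilon>>0. \<forall>s t v w. (s, t) \<in> Q \<longrightarrow> \<bar>v\<bar> < \<epsilon> \<longrightarrow> \<bar>w\<bar> < \<epsilon> \<longrightarrow>
     c s + v *\<^sub>R \<xi>1 s = c t + w *\<^sub>R \<xi>2 t \<longrightarrow>
     norm ((s - t) *\<^sub>R vderiv c t + v *\<^sub>R \<xi>1 t - w *\<^sub>R \<xi>2 t) \<le> (m/2) * \<bar>s - t\<bar>"
    proof (rule assemble[of a0 b0 c "vderiv c" \<xi>1 \<xi>2 Q "m/2"])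
      show "\<And>x. x \<in> {a0..b0} \<Longrightarrow> (c has_vector_derivative vderiv c x) (at x)" by (rule d1)
      show "continuous_on {a0..b0} (vderiv c)" by (rule cont1)
      show "\<And>s t. (s, t) \<in> Q \<Longrightarrow> c s = c t \<Longrightarrow> s = t" by (rule Q_inj)
    qed (use l1 a b Q_compact Q_sub cont0 th in auto)
    then show ?thesis using that by blast
  qed
  have "Jeq cl l s t \<and> Z v w = 0"
    if s: "s \<in> Jdom cl l" and t: "t \<in> Jdom cl l" and v: "\<bar>v\<bar> < \<epsilon>" and w: "\<bar>w\<bar> < \<epsilon>"
      and eq: "c s + v *\<^sub>R \<xi>1 s = c t + w *\<^sub>R \<xi>2 t" for s t v w
  proof -
    obtain k1 k2 :: int where k: "(s + of_int k1 * l, t + of_int k2 * l) \<in> Q" and k0: "\<not> cl \<longrightarrow> k1 = 0 \<and> k2 = 0"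
      using reduce[OF s t] by blast
    define s' where "s' = s + of_int k1 * l"
    define t' where "t' = t + of_int k2 * l"
    have e1: "c s' + v *\<^sub>R \<xi>1 s' = c s + v *\<^sub>R \<xi>1 s"
    proof (cases cl)
      case True then show ?thesis using periodic_int[OF per_c] periodic_int[OF p1] by (simp add: s'_def)
    next
      case False then show ?thesis using k0 by (simp add: s'_def)
    qed
    have e2: "c t' + w *\<^sub>R \<xi>2 t' = c t + w *\<^sub>R \<xi>2 t"
    proof (cases cl)
      case True then show ?thesis using periodic_int[OF per_c] periodic_int[OF p2] by (simp add: t'_def)
    next
      case False then show ?thesis using k0 by (simp add: t'_def)
    qed
    have Q': "(s', t') \<in> Q" using k by (simp add: s'_def t'_def)
    have t'I: "t' \<in> {a0..b0}" using Q' Q_sub by auto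
    have up: "norm ((s' - t') *\<^sub>R vderiv c t' + v *\<^sub>R \<xi>1 t' - w *\<^sub>R \<xi>2 t') \<le> (m/2) * \<bar>s' - t'\<bar>"
    proof -
      have eq': "c s' + v *\<^sub>R \<xi>1 s' = c t' + w *\<^sub>R \<xi>2 t'" using e1 e2 eq by simp
      show ?thesis using A Q' v w eq' by blast
    qed
    have lo: "norm ((s' - t') *\<^sub>R vderiv c t' + v *\<^sub>R \<xi>1 t' - w *\<^sub>R \<xi>2 t') \<ge> m * norm (s' - t', Z v w)"
      by (rule m(2)[OF t'I])
    have "\<bar>s' - t'\<bar> \<le> norm (s' - t', Z v w)" using norm_fst_le[of "s' - t'" "Z v w"] by simp
    then have "m * norm (s' - t', Z v w) \<le> (m/2) * norm (s' - t', Z v w)"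
    proof -
      have "(m/2) * \<bar>s' - t'\<bar> \<le> (m/2) * norm (s' - t', Z v w)"
        using \<open>\<bar>s' - t'\<bar> \<le> norm (s' - t', Z v w)\<close> m(1) by (intro mult_left_mono) auto
      then show ?thesis using up lo by linarith
    qed
    then have "(m/2) * norm (s' - t', Z v w) \<le> 0" by linarith
    then have "norm (s' - t', Z v w) \<le> 0" using m(1) by (simp add: mult_le_0_iff)
    then have "norm (s' - t', Z v w) = 0" using norm_ge_zero by (metis antisym)
    then have st': "s' = t'" and Z: "Z v w = 0" by (simp_all add: prod_eq_iff)
    have "Jeq cl l s t"
    proof (cases cl)
      case True
      have "s - t = of_int (k2 - k1) * l" using st' by (simp add: s'_def t'_def algebra_simps)
      then have "\<exists>k::int. s - t = of_int k * l" by blast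
      then show ?thesis using True by (simp add: Jeq_def)
    next
      case False then show ?thesis using k0 st' by (simp add: Jeq_def s'_def t'_def)
    qed
    then show ?thesis using Z by simp
  qed
  then show ?thesis using \<epsilon> by blast
qed

lemma single:
  assumes nf: "normal_form cl l c \<alpha> \<beta>"
  shows "\<exists>\<epsilon>>0. \<forall>s\<in>Jdom cl l. \<forall>t\<in>Jdom cl l. \<forall>v w. \<bar>v\<bar> < \<epsilon> \<longrightarrow> \<bar>w\<bar> < \<epsilon> \<longrightarrow>
     c s + v *\<^sub>R ruling c \<alpha> \<beta> s = c t + w *\<^sub>R ruling c \<alpha> \<beta> t \<longrightarrow> Jeq cl l s t \<and> v - w = 0"
proof -
  let ?\<xi> = "ruling c \<alpha> \<beta>"
  note nff = nf_facts[OF nf]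
  define G where "G t z = fst z *\<^sub>R tangent c t + snd z *\<^sub>R ?\<xi> t" for t and z :: "real \<times> real"
  have "\<exists>m>0. \<forall>t\<in>{a0..b0}. \<forall>z. norm (G t z) \<ge> m * norm z"
  proof (rule indep[OF compact_Icc])
    show "continuous_on ({a0..b0} \<times> UNIV) (\<lambda>p. G (fst p) (snd p))"
      unfolding G_def
      by (intro continuous_intros cont_fst_comp lip_cont lip_T nff(1))
    show "G t (r *\<^sub>R z) = r *\<^sub>R G t z" for t r z by (simp add: G_def algebra_simps)
    show "z = 0" if t: "t \<in> {a0..b0}" and g: "G t z = 0" for t z
    proof -
      have tJ: "t \<in> Jdom cl l" using t I_sub by auto
      have "fst z = 0 \<and> snd z = 0"
        by (rule frame_indep1[OF ON_frame[OF tJ], of "sin (\<beta> t)" "cos (\<alpha> t)" "sin (\<alpha> t)"])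
           (use g nff(3)[OF tJ] in \<open>simp_all add: G_def ruling_def\<close>)
      then show ?thesis by (simp add: prod_eq_iff)
    qed
  qed
  then obtain m where m: "m > 0" "\<And>t z. t \<in> {a0..b0} \<Longrightarrow> norm (G t z) \<ge> m * norm z" by blast
  show ?thesis
  proof (rule pair[OF nff(1) nff(2) nff(2)])
    show "cl \<Longrightarrow> periodic l ?\<xi>" using per_ruling nff(4) by (simp add: periodic_def)
    then show "cl \<Longrightarrow> periodic l ?\<xi>" .
    show "m > 0" by (rule m(1))
    show "norm (a *\<^sub>R vderiv c t + v *\<^sub>R ?\<xi> t - w *\<^sub>R ?\<xi> t) \<ge> m * norm (a, v - w)"
      if "t \<in> {a0..b0}" for t a v w
      using m(2)[OF that, of "(a, v - w)"] by (simp add: G_def tangent_def algebra_simps)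
  qed
qed

lemma dual:
  assumes nf: "normal_form cl l c \<alpha> \<beta>" and nfd: "normal_form cl l c (\<lambda>s. - \<alpha> s) \<beta>d"
  shows "\<exists>\<epsilon>>0. \<forall>s\<in>Jdom cl l. \<forall>t\<in>Jdom cl l. \<forall>v w. \<bar>v\<bar> < \<epsilon> \<longrightarrow> \<bar>w\<bar> < \<epsilon> \<longrightarrow>
     c s + v *\<^sub>R ruling c \<alpha> \<beta> s = c t + w *\<^sub>R ruling c (\<lambda>s. - \<alpha> s) \<beta>d t \<longrightarrow> Jeq cl l s t \<and> (v, w) = 0"
proof -
  let ?\<xi> = "ruling c \<alpha> \<beta>" and ?\<xi>d = "ruling c (\<lambda>s. - \<alpha> s) \<beta>d"
  note nff = nf_facts[OF nf] and nfd = nf_facts[OF nfd]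
  define G where "G t z = fst z *\<^sub>R tangent c t + fst (snd z) *\<^sub>R ?\<xi> t - snd (snd z) *\<^sub>R ?\<xi>d t"
    for t and z :: "real \<times> real \<times> real"
  have "\<exists>m>0. \<forall>t\<in>{a0..b0}. \<forall>z. norm (G t z) \<ge> m * norm z"
  proof (rule indep[OF compact_Icc])
    show "continuous_on ({a0..b0} \<times> UNIV) (\<lambda>p. G (fst p) (snd p))"
      unfolding G_def
      by (intro continuous_intros cont_fst_comp lip_cont lip_T nff(1) nfd(1))
    show "G t (r *\<^sub>R z) = r *\<^sub>R G t z" for t r z by (simp add: G_def algebra_simps)
    show "z = 0" if t: "t \<in> {a0..b0}" and g: "G t z = 0" for t z
    proof -
      have tJ: "t \<in> Jdom cl l" using t I_sub by auto
      have "fst z = 0 \<and> fst (snd z) = 0 \<and> snd (snd z) = 0"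
        by (rule frame_indep2[OF ON_frame[OF tJ], of "sin (\<beta> t)" "sin (\<beta>d t)" "cos (\<alpha> t)" "sin (\<alpha> t)"
              _ _ "cos (\<beta> t)" _ "cos (\<beta>d t)"])
           (use g nff(3)[OF tJ] nfd(3)[OF tJ] in \<open>simp_all add: G_def ruling_def\<close>)
      then show ?thesis by (simp add: prod_eq_iff)
    qed
  qed
  then obtain m where m: "m > 0" "\<And>t z. t \<in> {a0..b0} \<Longrightarrow> norm (G t z) \<ge> m * norm z" by blast
  show ?thesis
  proof (rule pair[OF nff(1) nff(2) nfd(2)])
    show "cl \<Longrightarrow> periodic l ?\<xi>" using per_ruling nff(4) by (simp add: periodic_def)
    show "cl \<Longrightarrow> periodic l ?\<xi>d" using per_ruling nfd(4) by (simp add: periodic_def)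
    show "m > 0" by (rule m(1))
    show "norm (a *\<^sub>R vderiv c t + v *\<^sub>R ?\<xi> t - w *\<^sub>R ?\<xi>d t) \<ge> m * norm (a, (v, w))"
      if "t \<in> {a0..b0}" for t a v w
      using m(2)[OF that, of "(a, v, w)"] by (simp add: G_def tangent_def)
  qed
qed

end


theorem proposition2p21:
  fixes cl :: bool  (* True: closed curve *) and l :: real and c :: "real \<Rightarrow> real^3"
    and \<alpha> \<beta> \<beta>d :: "real \<Rightarrow> real"
  assumes curve: "arclength_embedded_curve cl l c"
    and kappa_pos: "\<forall>s\<in>Jdom cl l. curvature c s > 0"
    and F: "normal_form cl l c \<alpha> \<beta>"
    and dual: "normal_form cl l c (\<lambda>s. - \<alpha> s) \<beta>d"
  shows "\<exists>\<epsilon>0>0. \<forall>\<epsilon>. 0 < \<epsilon> \<and> \<epsilon> < \<epsilon>0 \<longrightarrow>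
           strip c \<alpha> \<beta> ` Omega cl l \<epsilon> \<inter> strip c (\<lambda>s. - \<alpha> s) \<beta>d ` Omega cl l \<epsilon>
             = c ` Jdom cl l
         \<and> (\<forall>p\<in>Omega cl l \<epsilon>. \<forall>q\<in>Omega cl l \<epsilon>.
              origami (strip c \<alpha> \<beta>) (strip c (\<lambda>s. - \<alpha> s) \<beta>d) p
                = origami (strip c \<alpha> \<beta>) (strip c (\<lambda>s. - \<alpha> s) \<beta>d) q
              \<longrightarrow> Jeq cl l (fst p) (fst q) \<and> snd p = snd q)"
proof -
  interpret crv cl l c using curve kappa_pos by unfold_locales
  let ?J = "Jdom cl l"
  let ?\<xi> = "ruling c \<alpha> \<beta>" and ?\<xi>d = "ruling c (\<lambda>s. - \<alpha> s) \<beta>d"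
  obtain \<epsilon>1 where e1: "\<epsilon>1 > 0" and S1: "\<forall>s\<in>?J. \<forall>t\<in>?J. \<forall>v w. \<bar>v\<bar> < \<epsilon>1 \<longrightarrow> \<bar>w\<bar> < \<epsilon>1 \<longrightarrow>
     c s + v *\<^sub>R ?\<xi> s = c t + w *\<^sub>R ?\<xi> t \<longrightarrow> Jeq cl l s t \<and> v - w = 0"
    using single[OF F] by blast
  obtain \<epsilon>2 where e2: "\<epsilon>2 > 0" and S2: "\<forall>s\<in>?J. \<forall>t\<in>?J. \<forall>v w. \<bar>v\<bar> < \<epsilon>2 \<longrightarrow> \<bar>w\<bar> < \<epsilon>2 \<longrightarrow>
     c s + v *\<^sub>R ?\<xi>d s = c t + w *\<^sub>R ?\<xi>d t \<longrightarrow> Jeq cl l s t \<and> v - w = 0"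
    using single[OF assms(4)] by blast
  obtain \<epsilon>3 where e3: "\<epsilon>3 > 0" and S3: "\<forall>s\<in>?J. \<forall>t\<in>?J. \<forall>v w. \<bar>v\<bar> < \<epsilon>3 \<longrightarrow> \<bar>w\<bar> < \<epsilon>3 \<longrightarrow>
     c s + v *\<^sub>R ?\<xi> s = c t + w *\<^sub>R ?\<xi>d t \<longrightarrow> Jeq cl l s t \<and> (v, w) = 0"
    using crv.dual[OF crv_axioms assms(3) assms(4)] by blast
  define \<epsilon>0 where "\<epsilon>0 = min \<epsilon>1 (min \<epsilon>2 \<epsilon>3)"
  have strip_eq: "\<And>a b s v. strip c a b (s, v) = c s + v *\<^sub>R ruling c a b s" by (simp add: strip_def)
  have Om: "\<And>e p. p \<in> Omega cl l e \<longleftrightarrow> fst p \<in> ?J \<and> \<bar>snd p\<bar> < e"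
    by (auto simp: Omega_def abs_less_iff)
  have main: "strip c \<alpha> \<beta> ` Omega cl l \<epsilon> \<inter> strip c (\<lambda>s. - \<alpha> s) \<beta>d ` Omega cl l \<epsilon> = c ` ?J
         \<and> (\<forall>p\<in>Omega cl l \<epsilon>. \<forall>q\<in>Omega cl l \<epsilon>.
              origami (strip c \<alpha> \<beta>) (strip c (\<lambda>s. - \<alpha> s) \<beta>d) p
                = origami (strip c \<alpha> \<beta>) (strip c (\<lambda>s. - \<alpha> s) \<beta>d) q
              \<longrightarrow> Jeq cl l (fst p) (fst q) \<and> snd p = snd q)"
    if e: "0 < \<epsilon>" "\<epsilon> < \<epsilon>0" for \<epsilon>
  proof (intro conjI ballI impI)
    have lt1: "\<epsilon> < \<epsilon>1" and lt2: "\<epsilon> < \<epsilon>2" and lt3: "\<epsilon> < \<epsilon>3" using e by (auto simp: \<epsilon>0_def)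
    show "strip c \<alpha> \<beta> ` Omega cl l \<epsilon> \<inter> strip c (\<lambda>s. - \<alpha> s) \<beta>d ` Omega cl l \<epsilon> = c ` ?J"
    proof
      show "strip c \<alpha> \<beta> ` Omega cl l \<epsilon> \<inter> strip c (\<lambda>s. - \<alpha> s) \<beta>d ` Omega cl l \<epsilon> \<subseteq> c ` ?J"
      proof
        fix x assume "x \<in> strip c \<alpha> \<beta> ` Omega cl l \<epsilon> \<inter> strip c (\<lambda>s. - \<alpha> s) \<beta>d ` Omega cl l \<epsilon>"
        then obtain p q where p: "p \<in> Omega cl l \<epsilon>" and q: "q \<in> Omega cl l \<epsilon>"
          and x1: "x = strip c \<alpha> \<beta> p" and x2: "x = strip c (\<lambda>s. - \<alpha> s) \<beta>d q" by blast
        obtain s v where pv: "p = (s, v)" by force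
        obtain t w where qw: "q = (t, w)" by force
        have s: "s \<in> ?J" "\<bar>v\<bar> < \<epsilon>" using p Om pv by auto
        have t: "t \<in> ?J" "\<bar>w\<bar> < \<epsilon>" using q Om qw by auto
        have "c s + v *\<^sub>R ?\<xi> s = c t + w *\<^sub>R ?\<xi>d t" using x1 x2 pv qw strip_eq by simp
        then have "(v, w) = 0" using S3[rule_format, OF s(1) t(1)] s(2) t(2) lt3 by (meson less_trans)
        then have "v = 0" by (simp add: zero_prod_def)
        then have "x = c s" using x1 pv strip_eq by simp
        then show "x \<in> c ` ?J" using s by blast
      qed
      show "c ` ?J \<subseteq> strip c \<alpha> \<beta> ` Omega cl l \<epsilon> \<inter> strip c (\<lambda>s. - \<alpha> s) \<beta>d ` Omega cl l \<epsilon>"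
      proof
        fix x assume "x \<in> c ` ?J"
        then obtain s where s: "s \<in> ?J" and x: "x = c s" by blast
        have o: "(s, 0) \<in> Omega cl l \<epsilon>" using s e Om by auto
        have "x = strip c \<alpha> \<beta> (s, 0)" "x = strip c (\<lambda>s. - \<alpha> s) \<beta>d (s, 0)" using x strip_eq by simp_all
        then show "x \<in> strip c \<alpha> \<beta> ` Omega cl l \<epsilon> \<inter> strip c (\<lambda>s. - \<alpha> s) \<beta>d ` Omega cl l \<epsilon>"
          using o by blast
      qed
    qed
    fix p q assume p: "p \<in> Omega cl l \<epsilon>" and q: "q \<in> Omega cl l \<epsilon>"
      and eq: "origami (strip c \<alpha> \<beta>) (strip c (\<lambda>s. - \<alpha> s) \<beta>d) p
                = origami (strip c \<alpha> \<beta>) (strip c (\<lambda>s. - \<alpha> s) \<beta>d) q"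
    obtain s v where pv: "p = (s, v)" by force
    obtain t w where qw: "q = (t, w)" by force
    have s: "s \<in> ?J" "\<bar>v\<bar> < \<epsilon>" using p Om pv by auto
    have t: "t \<in> ?J" "\<bar>w\<bar> < \<epsilon>" using q Om qw by auto
    have "Jeq cl l s t \<and> v = w"
    proof (cases "v \<ge> 0"; cases "w \<ge> 0")
      assume "v \<ge> 0" "w \<ge> 0"
      then have "c s + v *\<^sub>R ?\<xi> s = c t + w *\<^sub>R ?\<xi> t" using eq pv qw strip_eq by (simp add: origami_def)
      moreover have "\<bar>v\<bar> < \<epsilon>1" "\<bar>w\<bar> < \<epsilon>1" using s(2) t(2) lt1 by linarith+
      ultimately show ?thesis using S1[rule_format, OF s(1) t(1)] by simp
    next
      assume "\<not> v \<ge> 0" "\<not> w \<ge> 0"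
      then have "c s + v *\<^sub>R ?\<xi>d s = c t + w *\<^sub>R ?\<xi>d t" using eq pv qw strip_eq by (simp add: origami_def)
      moreover have "\<bar>v\<bar> < \<epsilon>2" "\<bar>w\<bar> < \<epsilon>2" using s(2) t(2) lt2 by linarith+
      ultimately show ?thesis using S2[rule_format, OF s(1) t(1)] by simp
    next
      assume a: "v \<ge> 0" "\<not> w \<ge> 0"
      then have "c s + v *\<^sub>R ?\<xi> s = c t + w *\<^sub>R ?\<xi>d t" using eq pv qw strip_eq by (simp add: origami_def)
      moreover have "\<bar>v\<bar> < \<epsilon>3" "\<bar>w\<bar> < \<epsilon>3" using s(2) t(2) lt3 by linarith+
      ultimately have "(v, w) = 0" using S3[rule_format, OF s(1) t(1)] by simp
      then show ?thesis using a by (simp add: zero_prod_def)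
    next
      assume a: "\<not> v \<ge> 0" "w \<ge> 0"
      then have "c t + w *\<^sub>R ?\<xi> t = c s + v *\<^sub>R ?\<xi>d s" using eq pv qw strip_eq by (simp add: origami_def)
      moreover have "\<bar>v\<bar> < \<epsilon>3" "\<bar>w\<bar> < \<epsilon>3" using s(2) t(2) lt3 by linarith+
      ultimately have "(w, v) = 0" using S3[rule_format, OF t(1) s(1)] by simp
      then show ?thesis using a by (simp add: zero_prod_def)
    qed
    then show "Jeq cl l (fst p) (fst q)" "snd p = snd q" using pv qw by simp_all
  qed
  have "\<epsilon>0 > 0" using e1 e2 e3 by (simp add: \<epsilon>0_def)
  then show ?thesis using main by blast
qed


end
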